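(* For every $E\subseteq\mathbb{F}_q^2$, $\Psi(2,2)\le\Psi(3,1)$.
   Context: $O(\mathbb{F}_q^2)$ is the group of $2\times2$ matrices $\theta$ over $\mathbb{F}_q$ ($q$ odd) with $\theta^T\theta=I$. $\lambda_\theta(w)=|\{(u,v)\in E^2: u-\theta v=w\}|$. For positive integers $a,b$, $$\Psi(a,b)=\sum_{x,x'\in\mathbb{F}_q^2}\ \sum_{\theta,\phi\in O(\mathbb{F}_q^2)}\lambda_\theta(x-\theta x')^a\,\lambda_\phi(x-\phi x')^b.$$ *)

theory Defs
  imports "HOL-Analysis.Analysis"
begin

definition orth2 :: "('a::field ^ 2 ^ 2) set" where
  "orth2 = {\<theta>. transpose \<theta> ** \<theta> = mat 1}"

definition lam :: "('a::field ^ 2) set \<Rightarrow> 'a ^ 2 ^ 2 \<Rightarrow> 'a ^ 2 \<Rightarrow> nat" where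
  "lam E \<theta> w = card {(u, v). u \<in> E \<and> v \<in> E \<and> u - \<theta> *v v = w}"

definition Psi :: "('a::{finite,field} ^ 2) set \<Rightarrow> nat \<Rightarrow> nat \<Rightarrow> nat" where
  "Psi E a b = (\<Sum>x\<in>UNIV. \<Sum>x'\<in>UNIV. \<Sum>\<theta>\<in>orth2. \<Sum>\<phi>\<in>orth2.
      lam E \<theta> (x - \<theta> *v x') ^ a * lam E \<phi> (x - \<phi> *v x') ^ b)"

end

theory Submission
  imports Defs
begin

lemma pt: "2 * ((a::nat)^2 * b^2) \<le> a^3 * b + b^3 * a"
proof -
  have "0 \<le> int a * int b * (int a - int b)^2" by simp
  hence "2 * (int a^2 * int b^2) \<le> int a^3 * int b + int b^3 * int a"
    by (simp add: power2_eq_square power3_eq_cube algebra_simps)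
  hence "int (2 * (a^2 * b^2)) \<le> int (a^3 * b + b^3 * a)" by simp
  thus ?thesis by linarith
qed

lemma cs:
  fixes f :: "'b \<Rightarrow> nat"
  shows "(\<Sum>i\<in>A. f i ^ 2) * (\<Sum>i\<in>A. f i ^ 2) \<le> (\<Sum>i\<in>A. f i ^ 3) * (\<Sum>i\<in>A. f i ^ 1)"
proof -
  have 1: "(\<Sum>i\<in>A. \<Sum>j\<in>A. 2*(f i^2*f j^2)) \<le> (\<Sum>i\<in>A. \<Sum>j\<in>A. f i^3*f j + f j^3 * f i)"
    by (intro sum_mono pt)
  have 2: "(\<Sum>i\<in>A. \<Sum>j\<in>A. 2*(f i^2*f j^2)) = 2 * ((\<Sum>i\<in>A. f i ^ 2) * (\<Sum>i\<in>A. f i ^ 2))"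
    by (simp only: sum_product sum_distrib_left[symmetric])
  have 3: "(\<Sum>i\<in>A. \<Sum>j\<in>A. f i^3*f j) = (\<Sum>i\<in>A. f i ^ 3) * (\<Sum>i\<in>A. f i ^ 1)"
    by (simp only: sum_product power_one_right)
  have 4: "(\<Sum>i\<in>A. \<Sum>j\<in>A. f j^3*f i) = (\<Sum>i\<in>A. \<Sum>j\<in>A. f i^3*f j)"
    by (rule sum.swap)
  have 5: "(\<Sum>i\<in>A. \<Sum>j\<in>A. f i^3*f j + f j^3 * f i) = (\<Sum>i\<in>A. \<Sum>j\<in>A. f i^3*f j) + (\<Sum>i\<in>A. \<Sum>j\<in>A. f j^3*f i)"
    by (simp only: sum.distrib)
  from 1 2 3 4 5 show ?thesis by linarith
qed

theorem lemma3p2: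
  fixes E :: "('a::{finite,field} ^ 2) set"
  assumes "odd CARD('a)"
  shows "Psi E 2 2 \<le> Psi E 3 1"
  unfolding Psi_def
proof (rule sum_mono, rule sum_mono)
  fix x x' :: "'a^2"
  let ?g = "\<lambda>\<theta>. lam E \<theta> (x - \<theta> *v x')"
  have "(\<Sum>\<theta>\<in>orth2. \<Sum>\<phi>\<in>orth2. ?g \<theta> ^ 2 * ?g \<phi> ^ 2)
      = (\<Sum>\<theta>\<in>orth2. ?g \<theta> ^ 2) * (\<Sum>\<phi>\<in>orth2. ?g \<phi> ^ 2)"
    by (simp only: sum_product)
  also have "\<dots> \<le> (\<Sum>\<theta>\<in>orth2. ?g \<theta> ^ 3) * (\<Sum>\<phi>\<in>orth2. ?g \<phi> ^ 1)"
    by (rule cs)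
  also have "\<dots> = (\<Sum>\<theta>\<in>orth2. \<Sum>\<phi>\<in>orth2. ?g \<theta> ^ 3 * ?g \<phi> ^ 1)"
    by (simp only: sum_product)
  finally show "(\<Sum>\<theta>\<in>orth2. \<Sum>\<phi>\<in>orth2. ?g \<theta> ^ 2 * ?g \<phi> ^ 2)
      \<le> (\<Sum>\<theta>\<in>orth2. \<Sum>\<phi>\<in>orth2. ?g \<theta> ^ 3 * ?g \<phi> ^ 1)" .
qed

end
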